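(* Let $p$ be any prime, $G=SL(2,\mathbb{Z}_p)$, $T=\{F\in SL(2,\mathbb{Z}_p):\mathrm{Tr}(F)\neq 2\pmod p\}$ and $\Gamma=\Gamma(G,T)$. Then assigning to each $F=\begin{pmatrix}\alpha&\beta\\ \gamma&\delta\end{pmatrix}$ the color $(\alpha,\beta)$ is a proper vertex coloring of $\Gamma$ with $p^2-1$ colors, so that $p(p-1)\leq\chi(\Gamma)\leq p^2-1$ and $\omega(\Gamma)\leq p^2-1$.
   Context: The Cayley graph $\Gamma(G,T)$ has vertex set $G$ and an edge between $g_1,g_2$ iff $g_1^{-1}g_2\in T$. A proper coloring assigns colors to vertices so that adjacent vertices receive different colors; $\chi(\Gamma)$ is the minimum number of colors in a proper coloring, and $\omega(\Gamma)$ is the largest size of a set of pairwise adjacent vertices. *)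

theory Defs
  imports Main "HOL-Computational_Algebra.Primes"
begin

text \<open>2x2 matrices over Z_p represented as tuples (alpha, beta, gamma, delta) of
 integer representatives in {0..<p}, i.e. the matrix [[alpha, beta],[gamma, delta]].\<close>

type_synonym mat2 = "int \<times> int \<times> int \<times> int"

definition SL2 :: "nat \<Rightarrow> mat2 set" where
  "SL2 p = {(a,b,c,d). a \<in> {0..<int p} \<and> b \<in> {0..<int p} \<and> c \<in> {0..<int p} \<and> d \<in> {0..<int p}
              \<and> (a*d - b*c) mod int p = 1 mod int p}"

fun mmul :: "nat \<Rightarrow> mat2 \<Rightarrow> mat2 \<Rightarrow> mat2" where
  "mmul p (a,b,c,d) (e,f,g,h) =
     ((a*e + b*g) mod int p, (a*f + b*h) mod int p, (c*e + d*g) mod int p, (c*f + d*h) mod int p)"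

text \<open>Inverse in SL(2,Z_p): the adjugate matrix (determinant is 1).\<close>
fun minv :: "nat \<Rightarrow> mat2 \<Rightarrow> mat2" where
  "minv p (a,b,c,d) = (d mod int p, (- b) mod int p, (- c) mod int p, a mod int p)"

fun mtrace :: "mat2 \<Rightarrow> int" where
  "mtrace (a,b,c,d) = a + d"

definition Tset :: "nat \<Rightarrow> mat2 set" where
  "Tset p = {F \<in> SL2 p. mtrace F mod int p \<noteq> 2 mod int p}"

definition cayley_adj :: "nat \<Rightarrow> mat2 \<Rightarrow> mat2 \<Rightarrow> bool" where
  "cayley_adj p g1 g2 \<longleftrightarrow> mmul p (minv p g1) g2 \<in> Tset p"

definition proper_coloring :: "'v set \<Rightarrow> ('v \<Rightarrow> 'v \<Rightarrow> bool) \<Rightarrow> ('v \<Rightarrow> 'c) \<Rightarrow> bool" where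
  "proper_coloring V E col \<longleftrightarrow> (\<forall>u\<in>V. \<forall>v\<in>V. E u v \<longrightarrow> col u \<noteq> col v)"

definition chromatic_number :: "'v set \<Rightarrow> ('v \<Rightarrow> 'v \<Rightarrow> bool) \<Rightarrow> nat" where
  "chromatic_number V E = (LEAST k. \<exists>col :: 'v \<Rightarrow> nat. (\<forall>v\<in>V. col v < k) \<and> proper_coloring V E col)"

definition is_clique :: "'v set \<Rightarrow> ('v \<Rightarrow> 'v \<Rightarrow> bool) \<Rightarrow> 'v set \<Rightarrow> bool" where
  "is_clique V E K \<longleftrightarrow> K \<subseteq> V \<and> (\<forall>u\<in>K. \<forall>v\<in>K. u \<noteq> v \<longrightarrow> E u v)"

definition clique_number :: "'v set \<Rightarrow> ('v \<Rightarrow> 'v \<Rightarrow> bool) \<Rightarrow> nat" where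
  "clique_number V E = Max {card K | K. is_clique V E K}"

end

theory Submission imports Defs begin

fun Bf :: "mat2 \<Rightarrow> mat2 \<Rightarrow> int" where
  "Bf (a,b,c,d) (e,f,g,h) = d*e - b*g - c*f + a*h"
fun mdet :: "mat2 \<Rightarrow> int" where
  "mdet (a,b,c,d) = a*d - b*c"

lemma modx: "(x::int) mod n = x - n * (x div n)" by (metis minus_div_mult_eq_mod mult.commute)

lemma trace_Bf: "mtrace (mmul p (minv p x) y) mod int p = Bf x y mod int p"
  apply (cases x; cases y) apply simp apply (simp only: mod_eq_dvd_iff) apply (simp only: modx) apply (simp add: algebra_simps)
  done

lemma Bf_mmul: "Bf (mmul p x y) (mmul p x z) mod int p = (mdet x * Bf y z) mod int p"
  apply (cases x; cases y; cases z) apply simp apply (simp only: mod_eq_dvd_iff) apply (simp only: modx) apply (simp add: algebra_simps)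
  done

lemma det_mmul: "mdet (mmul p x y) mod int p = (mdet x * mdet y) mod int p"
  apply (cases x; cases y) apply simp apply (simp only: mod_eq_dvd_iff) apply (simp only: modx) apply (simp add: algebra_simps)
  done

lemma det_minv: "mdet (minv p x) mod int p = mdet x mod int p"
  apply (cases x) apply simp apply (simp only: mod_eq_dvd_iff) apply (simp only: modx) apply (simp add: algebra_simps)
  done

lemma mmul_inv: "mmul p x (mmul p (minv p x) y) = (case y of (e,f,g,h) \<Rightarrow>
   ((mdet x * e) mod int p, (mdet x * f) mod int p, (mdet x * g) mod int p, (mdet x * h) mod int p))"
  apply (cases x; cases y) apply simp apply (simp only: mod_eq_dvd_iff) apply (simp only: modx) apply (simp add: algebra_simps)
  done

lemma SL2_iff: "x \<in> SL2 p \<longleftrightarrow> (case x of (a,b,c,d) \<Rightarrow> a \<in> {0..<int p} \<and> b \<in> {0..<int p} \<and> c \<in> {0..<int p} \<and> d \<in> {0..<int p})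
   \<and> mdet x mod int p = 1 mod int p"
  by (cases x) (simp add: SL2_def)

lemma one_mod_det: "(x::int) mod P = 1 mod P \<Longrightarrow> (x * y) mod P = y mod P"
  by (metis mod_mult_left_eq mult_1)

lemma mmul_SL2: assumes "p > 0" "x \<in> SL2 p" "y \<in> SL2 p" shows "mmul p x y \<in> SL2 p"
proof -
  have "mdet (mmul p x y) mod int p = 1 mod int p"
    using assms det_mmul[of p x y] by (simp add: SL2_iff one_mod_det)
  thus ?thesis using assms(1) by (cases x; cases y) (simp add: SL2_iff)
qed

lemma minv_SL2: assumes "p > 0" "x \<in> SL2 p" shows "minv p x \<in> SL2 p"
proof -
  have "mdet (minv p x) mod int p = 1 mod int p"
    using assms det_minv[of p x] by (simp add: SL2_iff)
  thus ?thesis using assms(1) by (cases x) (simp add: SL2_iff)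
qed

lemma range_eq: "0 \<le> (x::int) \<Longrightarrow> x < P \<Longrightarrow> 0 \<le> y \<Longrightarrow> y < P \<Longrightarrow> P dvd x - y \<Longrightarrow> x = y"
  by (metis mod_eq_dvd_iff mod_pos_pos_trivial)

lemma modeq_dvd: "(x::int) mod P = y mod P \<Longrightarrow> P dvd x - y"
  by (simp add: mod_eq_dvd_iff)

lemma keyA: "(P::int) dvd a*d - b*c - 1 \<Longrightarrow> P dvd a + d - 2 \<Longrightarrow> P dvd (a-1)^2 + b*c"
proof -
  assume h: "P dvd a*d - b*c - 1" "P dvd a + d - 2"
  have "(a-1)^2 + b*c = a*(a+d-2) - (a*d - b*c - 1)" by (simp add: power2_eq_square algebra_simps)
  thus ?thesis using h by (metis dvd_diff dvd_mult)
qed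

lemma keyB: "(P::int) dvd a + d - 2 \<Longrightarrow> P dvd a' + d' - 2 \<Longrightarrow> P dvd (d*a' - b*c' - c*b' + a*d') - 2
   \<Longrightarrow> P dvd 2*(a-1)*(a'-1) + b*c' + c*b'"
proof -
  assume h: "P dvd a + d - 2" "P dvd a' + d' - 2" "P dvd (d*a' - b*c' - c*b' + a*d') - 2"
  have "2*(a-1)*(a'-1) + b*c' + c*b' = (a+d-2)*a' + a*(a'+d'-2) - ((d*a' - b*c' - c*b' + a*d') - 2)"
    by (simp add: algebra_simps)
  thus ?thesis using h by (metis dvd_diff dvd_add dvd_mult dvd_mult2)
qed

lemma prime_sq: "prime (P::int) \<Longrightarrow> P dvd x^2 \<Longrightarrow> P dvd x"
  using prime_dvd_power by blast

lemma key_count: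
  assumes pr: "prime p" and TS: "T \<subseteq> SL2 p"
    and tr: "\<forall>u\<in>T. mtrace u mod int p = 2 mod int p"
    and bb: "\<forall>u\<in>T. \<forall>v\<in>T. Bf u v mod int p = 2 mod int p"
  shows "card T \<le> p"
proof -
  define P where "P = int p"
  have Pp: "prime P" using pr by (simp add: P_def prime_nat_int_transfer)
  have P1: "P > 1" using Pp prime_gt_1_int by blast
  have fin: "finite {0..<P}" by simp
  have cardP: "card {0..<P} = p" by (simp add: P_def)
  have mem: "\<And>a b c d. (a,b,c,d) \<in> T \<Longrightarrow> a \<in> {0..<P} \<and> b \<in> {0..<P} \<and> c \<in> {0..<P} \<and> d \<in> {0..<P}
      \<and> P dvd (a-1)^2 + b*c \<and> P dvd a + d - 2 \<and> P dvd a*d - b*c - 1"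
  proof -
    fix a b c d assume u: "(a,b,c,d) \<in> T"
    hence s: "(a,b,c,d) \<in> SL2 p" using TS by auto
    have h1: "P dvd a*d - b*c - 1" using s modeq_dvd by (simp add: SL2_iff P_def)
    have "mtrace (a,b,c,d) mod int p = 2 mod int p" using tr u by blast
    hence h2: "P dvd a + d - 2" using modeq_dvd unfolding P_def by fastforce
    show "?thesis a b c d" using s h1 h2 keyA[OF h1 h2] by (simp add: SL2_iff P_def)
  qed
  have pair: "\<And>a b c d a' b' c' d'. (a,b,c,d) \<in> T \<Longrightarrow> (a',b',c',d') \<in> T \<Longrightarrow>
      P dvd 2*(a-1)*(a'-1) + b*c' + c*b'"
  proof -
    fix a b c d a' b' c' d' assume u: "(a,b,c,d) \<in> T" and v: "(a',b',c',d') \<in> T"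
    have "Bf (a,b,c,d) (a',b',c',d') mod int p = 2 mod int p" using bb u v by blast
    hence h: "P dvd (d*a' - b*c' - c*b' + a*d') - 2" using modeq_dvd unfolding P_def by fastforce
    have h1: "P dvd a + d - 2" using mem[OF u] by blast
    have h2: "P dvd a' + d' - 2" using mem[OF v] by blast
    show "?thesis a b c d a' b' c' d'" using keyB[OF h1 h2 h] .
  qed
  have b0: "\<And>a b c d. (a,b,c,d) \<in> T \<Longrightarrow> b = 0 \<Longrightarrow> a = 1 \<and> d = 1"
  proof -
    fix a b c d assume u: "(a,b,c,d) \<in> T" and b: "b = 0"
    have "P dvd (a-1)^2" using mem[OF u] b by simp
    hence "P dvd a - 1" using prime_sq Pp by blast
    hence a: "a = 1" using range_eq[of a P 1] mem[OF u] P1 by auto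
    have "P dvd d - 1" using mem[OF u] a by simp
    hence "d = 1" using range_eq[of d P 1] mem[OF u] P1 by auto
    thus "a = 1 \<and> d = 1" using a by simp
  qed
  show ?thesis
  proof (cases "\<exists>u\<in>T. fst (snd u) \<noteq> 0")
    case True
    then obtain a0 b0' c0 d0 where u0: "(a0,b0',c0,d0) \<in> T" and nb: "b0' \<noteq> 0" by auto
    have "inj_on (\<lambda>u. fst (snd u)) T"
    proof (rule inj_onI)
      fix u v assume uT: "u \<in> T" and vT: "v \<in> T" and e: "fst (snd u) = fst (snd v)"
      obtain a b c d where ud: "u = (a,b,c,d)" by (cases u) auto
      obtain a' b' c' d' where vd: "v = (a',b',c',d')" by (cases v) auto
      have uT': "(a,b,c,d) \<in> T" and vT': "(a',b',c',d') \<in> T" using uT vT ud vd by auto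
      have bb': "b' = b" using e ud vd by simp
      show "u = v"
      proof (cases "b = 0")
        case True
        have cz: "\<And>a b c d. (a,b,c,d) \<in> T \<Longrightarrow> b = 0 \<Longrightarrow> c = 0"
        proof -
          fix a b c d assume w: "(a,b,c,d) \<in> T" and b: "b = 0"
          have ad: "a = 1 \<and> d = 1" using b0[OF w b] .
          have "P dvd c * b0'" using pair[OF w u0] ad b by simp
          hence "P dvd c \<or> P dvd b0'" using Pp prime_dvd_mult_iff by blast
          moreover have "\<not> P dvd b0'" using range_eq[of b0' P 0] mem[OF u0] nb by auto
          ultimately have "P dvd c - 0" by simp
          thus "c = 0" using range_eq[of c P 0] mem[OF w] P1 by auto
        qed
        show ?thesis using ud vd b0[OF uT'] b0[OF vT'] cz[OF uT'] cz[OF vT'] True bb' by simp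
      next
        case False
        have "(a-a')^2 = ((a-1)^2 + b*c) + ((a'-1)^2 + b'*c') - (2*(a-1)*(a'-1) + b*c' + c*b')"
          using bb' by (simp add: power2_eq_square algebra_simps)
        hence "P dvd (a-a')^2" using mem[OF uT'] mem[OF vT'] pair[OF uT' vT'] by (metis dvd_add dvd_diff)
        hence "P dvd a - a'" using prime_sq Pp by blast
        hence aa: "a = a'" using range_eq[of a P a'] mem[OF uT'] mem[OF vT'] by auto
        have "P dvd (a + d - 2) - (a' + d' - 2)" using mem[OF uT'] mem[OF vT'] by (metis dvd_diff)
        hence "P dvd d - d'" using aa by simp
        hence dd: "d = d'" using range_eq[of d P d'] mem[OF uT'] mem[OF vT'] by auto
        have "b*(c'-c) = (a*d - b*c - 1) - (a'*d' - b'*c' - 1)" using aa dd bb' by (simp add: algebra_simps)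
        hence "P dvd b*(c'-c)" using mem[OF uT'] mem[OF vT'] by (metis dvd_diff)
        hence "P dvd b \<or> P dvd c' - c" using Pp prime_dvd_mult_iff by blast
        moreover have "\<not> P dvd b" using range_eq[of b P 0] mem[OF uT'] False by auto
        ultimately have "P dvd c' - c" by simp
        hence "c' = c" using range_eq[of c' P c] mem[OF uT'] mem[OF vT'] by auto
        thus ?thesis using ud vd aa dd bb' by simp
      qed
    qed
    moreover have "(\<lambda>u. fst (snd u)) ` T \<subseteq> {0..<P}" using mem by auto
    ultimately have "card T \<le> card {0..<P}" using card_inj_on_le fin by blast
    thus ?thesis using cardP by simp
  next
    case False
    have "inj_on (\<lambda>u. fst (snd (snd u))) T"
    proof (rule inj_onI)
      fix u v assume uT: "u \<in> T" and vT: "v \<in> T" and e: "fst (snd (snd u)) = fst (snd (snd v))"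
      obtain a b c d where ud: "u = (a,b,c,d)" by (cases u) auto
      obtain a' b' c' d' where vd: "v = (a',b',c',d')" by (cases v) auto
      have uT': "(a,b,c,d) \<in> T" and vT': "(a',b',c',d') \<in> T" using uT vT ud vd by auto
      have "b = 0" "b' = 0" using False uT vT ud vd by auto
      thus "u = v" using b0[OF uT'] b0[OF vT'] e ud vd by simp
    qed
    moreover have "(\<lambda>u. fst (snd (snd u))) ` T \<subseteq> {0..<P}" using mem by auto
    ultimately have "card T \<le> card {0..<P}" using card_inj_on_le fin by blast
    thus ?thesis using cardP by simp
  qed
qed

lemma indep_Bf:
  assumes "p > 0" "S \<subseteq> SL2 p" "\<forall>u\<in>S. \<forall>v\<in>S. \<not> cayley_adj p u v" "u \<in> S" "v \<in> S"
  shows "Bf u v mod int p = 2 mod int p"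
proof -
  have m: "mmul p (minv p u) v \<in> SL2 p" using assms mmul_SL2 minv_SL2 by blast
  have "\<not> cayley_adj p u v" using assms by blast
  hence "mtrace (mmul p (minv p u) v) mod int p = 2 mod int p" using m
    by (simp add: cayley_adj_def Tset_def)
  thus ?thesis using trace_Bf by simp
qed

lemma indep_card:
  assumes pr: "prime p" and SS: "S \<subseteq> SL2 p" and ind: "\<forall>u\<in>S. \<forall>v\<in>S. \<not> cayley_adj p u v"
  shows "card S \<le> p"
proof (cases "S = {}")
  case True thus ?thesis by simp
next
  case False
  then obtain g where g: "g \<in> S" by auto
  have p0: "p > 0" using pr prime_gt_0_nat by blast
  have gS: "g \<in> SL2 p" using g SS by auto
  define f where "f = mmul p (minv p g)"
  have injf: "inj_on f S"
  proof (rule inj_onI)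
    fix x y assume xS: "x \<in> S" and yS: "y \<in> S" and e: "f x = f y"
    have dg: "mdet g mod int p = 1 mod int p" using gS by (simp add: SL2_iff)
    have bk: "\<And>z. z \<in> SL2 p \<Longrightarrow> mmul p g (f z) = z"
    proof -
      fix z assume zs: "z \<in> SL2 p"
      obtain e1 e2 e3 e4 where zd: "z = (e1,e2,e3,e4)" by (cases z) auto
      show "mmul p g (f z) = z" unfolding f_def mmul_inv using zs zd dg
        by (simp add: SL2_iff one_mod_det)
    qed
    show "x = y" using bk[of x] bk[of y] xS yS SS e by auto
  qed
  have T: "f ` S \<subseteq> SL2 p" using SS gS p0 mmul_SL2 minv_SL2 unfolding f_def by blast
  have tr: "\<forall>u\<in>f ` S. mtrace u mod int p = 2 mod int p"
    using trace_Bf indep_Bf[OF p0 SS ind g] unfolding f_def by auto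
  have bb: "\<forall>u\<in>f ` S. \<forall>v\<in>f ` S. Bf u v mod int p = 2 mod int p"
  proof (intro ballI)
    fix u v assume "u \<in> f ` S" "v \<in> f ` S"
    then obtain x y where x: "x \<in> S" "u = f x" and y: "y \<in> S" "v = f y" by auto
    have dg: "mdet (minv p g) mod int p = 1 mod int p" using minv_SL2[OF p0 gS] by (simp add: SL2_iff)
    have "Bf u v mod int p = (mdet (minv p g) * Bf x y) mod int p" using Bf_mmul x y unfolding f_def by simp
    also have "\<dots> = Bf x y mod int p" using dg one_mod_det by blast
    also have "\<dots> = 2 mod int p" using indep_Bf[OF p0 SS ind x(1) y(1)] .
    finally show "Bf u v mod int p = 2 mod int p" .
  qed
  have "card (f ` S) \<le> p" using key_count[OF pr T tr bb] .
  thus ?thesis using card_image[OF injf] by simp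
qed

lemma same_row_nonadj:
  assumes p0: "p > 0" and u: "u \<in> SL2 p" and v: "v \<in> SL2 p"
    and e: "fst u = fst v" "fst (snd u) = fst (snd v)"
  shows "\<not> cayley_adj p u v"
proof -
  obtain a b c d where ud: "u = (a,b,c,d)" by (cases u) auto
  obtain a' b' c' d' where vd: "v = (a',b',c',d')" by (cases v) auto
  have aa: "a' = a" "b' = b" using e ud vd by auto
  have d1: "(a*d - b*c) mod int p = 1 mod int p" using u ud by (simp add: SL2_def)
  have d2: "(a*d' - b*c') mod int p = 1 mod int p" using v vd aa by (simp add: SL2_def)
  have "Bf u v = (a*d - b*c) + (a*d' - b*c')" using ud vd aa by (simp add: algebra_simps)
  hence "Bf u v mod int p = 2 mod int p" using d1 d2
    by (metis mod_add_eq one_add_one)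
  hence "mtrace (mmul p (minv p u) v) mod int p = 2 mod int p" using trace_Bf by simp
  thus ?thesis by (simp add: cayley_adj_def Tset_def)
qed

lemma inv_ex: assumes "prime p" "0 < a" "a < int p" shows "\<exists>d. (a*d) mod int p = 1"
proof -
  have Pp: "prime (int p)" using assms by (simp add: prime_nat_int_transfer)
  have "\<not> int p dvd a" using assms zdvd_not_zless by blast
  hence "coprime (int p) a" using prime_imp_coprime Pp by blast
  hence g: "gcd a (int p) = 1" by (simp add: coprime_iff_gcd_eq_1 gcd.commute)
  obtain x y where "x * a + y * int p = gcd a (int p)" using bezout_int by blast
  hence "(a * x + int p * y) mod int p = 1 mod int p" using g by (simp add: algebra_simps)
  hence "(a * x) mod int p = 1 mod int p" by simp
  moreover have "1 mod int p = 1" using prime_gt_1_nat[OF assms(1)] by simp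
  ultimately show ?thesis by auto
qed

lemma row_image: assumes pr: "prime p"
  shows "(\<lambda>F. (fst F, fst (snd F))) ` SL2 p = ({0..<int p} \<times> {0..<int p}) - {(0,0)}"
proof -
  have P1: "int p > 1" using pr prime_gt_1_nat by simp
  have one: "1 mod int p = 1" using P1 by simp
  show ?thesis
  proof
    show "(\<lambda>F. (fst F, fst (snd F))) ` SL2 p \<subseteq> ({0..<int p} \<times> {0..<int p}) - {(0,0)}"
    proof
      fix x assume "x \<in> (\<lambda>F. (fst F, fst (snd F))) ` SL2 p"
      then obtain a b c d where s: "(a,b,c,d) \<in> SL2 p" and x: "x = (a,b)" by force
      have "(a*d - b*c) mod int p = 1" using s one by (simp add: SL2_def)
      hence "(a,b) \<noteq> (0,0)" by auto
      thus "x \<in> ({0..<int p} \<times> {0..<int p}) - {(0,0)}" using s x by (simp add: SL2_def)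
    qed
  next
    show "({0..<int p} \<times> {0..<int p}) - {(0,0)} \<subseteq> (\<lambda>F. (fst F, fst (snd F))) ` SL2 p"
    proof
      fix x assume xin: "x \<in> ({0..<int p} \<times> {0..<int p}) - {(0,0)}"
      obtain a b where x: "x = (a,b)" by (cases x) auto
      have r: "0 \<le> a" "a < int p" "0 \<le> b" "b < int p" "(a,b) \<noteq> (0,0)" using xin x by auto
      show "x \<in> (\<lambda>F. (fst F, fst (snd F))) ` SL2 p"
      proof (cases "a = 0")
        case False
        then obtain d where d: "(a*d) mod int p = 1" using inv_ex[OF pr] r by force
        have "(a * (d mod int p) - b * 0) mod int p = 1 mod int p" using d one by (simp add: mod_simps)
        hence "(a,b,0,d mod int p) \<in> SL2 p" using r P1 by (simp add: SL2_def)
        thus ?thesis using x by force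
      next
        case True
        hence "b > 0" using r by auto
        then obtain c where c: "(b*c) mod int p = 1" using inv_ex[OF pr] r by force
        have "(- (b * ((- c) mod int p))) mod int p = (b*c) mod int p"
          apply (simp only: mod_eq_dvd_iff) apply (simp only: modx) by (simp add: algebra_simps)
        hence "(a * 0 - b * ((- c) mod int p)) mod int p = 1 mod int p"
          using c one True by simp
        hence "(a,b,(-c) mod int p,0) \<in> SL2 p" using r P1 by (simp add: SL2_def)
        thus ?thesis using x by force
      qed
    qed
  qed
qed

lemma finite_SL2: "finite (SL2 p)"
proof -
  have "SL2 p \<subseteq> {0..<int p} \<times> {0..<int p} \<times> {0..<int p} \<times> {0..<int p}" by (auto simp: SL2_def)
  thus ?thesis by (rule finite_subset) simp
qed

lemma card_SL2_ge: assumes pr: "prime p" shows "(p - 1) * p * p \<le> card (SL2 p)"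
proof -
  define P where "P = int p"
  have P1: "P > 1" using pr prime_gt_1_nat P_def by simp
  define ia where "ia a = (SOME d. (a*d) mod P = 1)" for a
  have ia: "\<And>a. 0 < a \<Longrightarrow> a < P \<Longrightarrow> (a * ia a) mod P = 1"
    unfolding ia_def P_def using inv_ex[OF pr] by (metis (mono_tags, lifting) someI_ex)
  define A where "A = {1..<P} \<times> {0..<P} \<times> {0..<P}"
  define f where "f x = (case x of (a,b,c) \<Rightarrow> (a,b,c,(ia a * (1 + b*c)) mod P))" for x
  have inj: "inj_on f A" unfolding f_def by (rule inj_onI) auto
  have sub: "f ` A \<subseteq> SL2 p"
  proof
    fix y assume "y \<in> f ` A"
    then obtain a b c where abc: "(a,b,c) \<in> A" and y: "y = (a,b,c,(ia a * (1 + b*c)) mod P)"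
      unfolding f_def by force
    have r: "1 \<le> a" "a < P" "0 \<le> b" "b < P" "0 \<le> c" "c < P" using abc A_def by auto
    define X where "X = ia a * (1 + b*c)"
    have i: "P dvd a * ia a - 1" using ia[of a] r modeq_dvd[of "a * ia a" P 1] P1 by simp
    have "a * (X mod P) - b*c - 1 = (a * ia a - 1) * (1 + b*c) - P * (a * (X div P))"
      unfolding X_def by (simp add: modx algebra_simps)
    hence "P dvd a * (X mod P) - b*c - 1" using i by (metis dvd_diff dvd_mult2 dvd_triv_left)
    hence "(a * (X mod P) - b*c) mod P = 1 mod P" by (simp add: mod_eq_dvd_iff)
    thus "y \<in> SL2 p" using y r P1 unfolding SL2_def P_def X_def by auto
  qed
  have "card A \<le> card (SL2 p)" using card_inj_on_le[OF inj sub finite_SL2] .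
  moreover have "nat (int p - 1) = p - 1" by linarith
  hence "card A = (p - 1) * p * p" unfolding A_def P_def
    by (simp add: card_cartesian_product)
  ultimately show ?thesis by simp
qed

lemma aux1: "0 \<le> (a::int) \<Longrightarrow> a < P \<Longrightarrow> 0 \<le> b \<Longrightarrow> b < P \<Longrightarrow> a * P + b \<le> P * P - 1"
proof -
  assume h: "0 \<le> a" "a < P" "0 \<le> b" "b < P"
  have "a * P \<le> (P - 1) * P" using h by (intro mult_right_mono) auto
  thus ?thesis using h by (simp add: algebra_simps)
qed
lemma aux2: "0 \<le> (a::int) \<Longrightarrow> 0 \<le> b \<Longrightarrow> 0 < P \<Longrightarrow> a \<noteq> 0 \<or> b \<noteq> 0 \<Longrightarrow> 1 \<le> a * P + b"
proof -
  assume h: "0 \<le> a" "0 \<le> b" "0 < P" "a \<noteq> 0 \<or> b \<noteq> 0"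
  show ?thesis
  proof (cases "a = 0")
    case True thus ?thesis using h by simp
  next
    case False
    have "1 * P \<le> a * P" using h False by (intro mult_right_mono) auto
    thus ?thesis using h by linarith
  qed
qed
lemma aux3: "1 \<le> (x::int) \<Longrightarrow> x \<le> int p * int p - 1 \<Longrightarrow> nat x - 1 < p * p - 1"
proof -
  assume h: "1 \<le> x" "x \<le> int p * int p - 1"
  have "int (nat x) = x" using h by simp
  hence "int (nat x) \<le> int (p*p) - 1" using h by simp
  thus ?thesis using h by linarith
qed
theorem mainTheorem4:
  fixes p :: nat
  assumes "prime p"
  shows "proper_coloring (SL2 p) (cayley_adj p) (\<lambda>F. (fst F, fst (snd F)))
       \<and> card ((\<lambda>F. (fst F, fst (snd F))) ` SL2 p) = p^2 - 1
       \<and> p * (p - 1) \<le> chromatic_number (SL2 p) (cayley_adj p)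
       \<and> chromatic_number (SL2 p) (cayley_adj p) \<le> p^2 - 1
       \<and> clique_number (SL2 p) (cayley_adj p) \<le> p^2 - 1"
proof -
  have p1: "p > 1" using assms prime_gt_1_nat by blast
  hence p0: "p > 0" by simp
  define rw where "rw = (\<lambda>F::mat2. (fst F, fst (snd F)))"
  have proper: "proper_coloring (SL2 p) (cayley_adj p) rw"
    unfolding proper_coloring_def
  proof (intro ballI impI)
    fix u v assume u: "u \<in> SL2 p" and v: "v \<in> SL2 p" and adj: "cayley_adj p u v"
    show "rw u \<noteq> rw v"
    proof
      assume "rw u = rw v"
      hence "fst u = fst v" "fst (snd u) = fst (snd v)" unfolding rw_def by simp_all
      thus False using same_row_nonadj[OF p0 u v] adj by blast
    qed
  qed
  have c2: "rw ` SL2 p = ({0..<int p} \<times> {0..<int p}) - {(0,0)}"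
    using row_image[OF assms] unfolding rw_def .
  have cardim: "card (rw ` SL2 p) = p^2 - 1"
  proof -
    have c1: "card (({0..<int p} \<times> {0..<int p}) - {(0,0)}) = p * p - 1"
      using p0 by (simp add: card_cartesian_product)
    have "p * p = p^2" by (simp add: power2_eq_square)
    thus ?thesis using c1 c2 by metis
  qed
  define col :: "mat2 \<Rightarrow> nat" where "col = (\<lambda>F. nat (fst F * int p + fst (snd F)) - 1)"
  have colbound: "\<forall>v\<in>SL2 p. col v < p^2 - 1"
  proof (intro ballI)
    fix v assume v: "v \<in> SL2 p"
    have r: "rw v \<in> ({0..<int p} \<times> {0..<int p}) - {(0,0)}" using v c2 by blast
    obtain a b where ab: "rw v = (a,b)" by (cases "rw v") auto
    have r2: "0 \<le> a" "a < int p" "0 \<le> b" "b < int p" "a \<noteq> 0 \<or> b \<noteq> 0" using r ab by auto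
    have lt: "nat (a * int p + b) - 1 < p * p - 1"
      by (rule aux3[OF aux2[OF r2(1) r2(3) _ r2(5)] aux1[OF r2(1-4)]]) (use p0 in simp)
    have "fst v = a" "fst (snd v) = b" using ab unfolding rw_def by simp_all
    hence cv: "col v = nat (a * int p + b) - 1" unfolding col_def by simp
    have "p^2 = p * p" by (simp add: power2_eq_square)
    thus "col v < p^2 - 1" using lt cv by simp
  qed
  have colproper: "proper_coloring (SL2 p) (cayley_adj p) col"
    unfolding proper_coloring_def
  proof (intro ballI impI)
    fix u v assume u: "u \<in> SL2 p" and v: "v \<in> SL2 p" and adj: "cayley_adj p u v"
    have ne: "rw u \<noteq> rw v" using proper u v adj unfolding proper_coloring_def by blast
    obtain a b where ab: "rw u = (a,b)" by (cases "rw u") auto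
    obtain a' b' where ab': "rw v = (a',b')" by (cases "rw v") auto
    have r: "rw u \<in> ({0..<int p} \<times> {0..<int p}) - {(0,0)}" using u c2 by blast
    have r': "rw v \<in> ({0..<int p} \<times> {0..<int p}) - {(0,0)}" using v c2 by blast
    have ra: "0 \<le> a" "a < int p" "0 \<le> b" "b < int p" "a \<noteq> 0 \<or> b \<noteq> 0" using r ab by auto
    have ra': "0 \<le> a'" "a' < int p" "0 \<le> b'" "b' < int p" "a' \<noteq> 0 \<or> b' \<noteq> 0" using r' ab' by auto
    have g1: "a * int p + b \<ge> 1" using aux2[OF ra(1) ra(3) _ ra(5)] p0 by simp
    have g2: "a' * int p + b' \<ge> 1" using aux2[OF ra'(1) ra'(3) _ ra'(5)] p0 by simp
    show "col u \<noteq> col v"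
    proof
      assume "col u = col v"
      hence "nat (a * int p + b) - 1 = nat (a' * int p + b') - 1" using ab ab' unfolding col_def rw_def by simp
      hence e: "a * int p + b = a' * int p + b'" using g1 g2 by linarith
      have "(a * int p + b) div int p = a" using ra by simp
      moreover have "(a' * int p + b') div int p = a'" using ra' by simp
      ultimately have "a = a'" using e by simp
      hence "b = b'" using e by simp
      thus False using ne ab ab' \<open>a = a'\<close> by simp
    qed
  qed
  have ex: "\<exists>col :: mat2 \<Rightarrow> nat. (\<forall>v\<in>SL2 p. col v < p^2 - 1) \<and> proper_coloring (SL2 p) (cayley_adj p) col"
    using colbound colproper by blast
  have ub: "chromatic_number (SL2 p) (cayley_adj p) \<le> p^2 - 1"
    unfolding chromatic_number_def by (rule Least_le) (rule ex)
  have lb: "p * (p - 1) \<le> chromatic_number (SL2 p) (cayley_adj p)"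
  proof -
    define k where "k = chromatic_number (SL2 p) (cayley_adj p)"
    have "\<exists>col :: mat2 \<Rightarrow> nat. (\<forall>v\<in>SL2 p. col v < k) \<and> proper_coloring (SL2 p) (cayley_adj p) col"
      unfolding k_def chromatic_number_def by (rule LeastI_ex) (use ex in blast)
    then obtain c :: "mat2 \<Rightarrow> nat" where cb: "\<forall>v\<in>SL2 p. c v < k" and cp: "proper_coloring (SL2 p) (cayley_adj p) c"
      by blast
    define C where "C i = {v \<in> SL2 p. c v = i}" for i
    have un: "SL2 p = (\<Union>i\<in>{..<k}. C i)" using cb unfolding C_def by auto
    have cC: "\<And>i. card (C i) \<le> p"
    proof -
      fix i
      have "\<forall>u\<in>C i. \<forall>v\<in>C i. \<not> cayley_adj p u v"
      proof (intro ballI notI)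
        fix u v assume uC: "u \<in> C i" and vC: "v \<in> C i" and ad: "cayley_adj p u v"
        have u1: "u \<in> SL2 p" "c u = i" using uC unfolding C_def by simp_all
        have v1: "v \<in> SL2 p" "c v = i" using vC unfolding C_def by simp_all
        have "c u \<noteq> c v" using cp u1(1) v1(1) ad unfolding proper_coloring_def by blast
        thus False using u1(2) v1(2) by simp
      qed
      moreover have "C i \<subseteq> SL2 p" unfolding C_def by auto
      ultimately show "card (C i) \<le> p" using indep_card[OF assms] by blast
    qed
    have "card (SL2 p) \<le> (\<Sum>i\<in>{..<k}. card (C i))" using un card_UN_le[of "{..<k}" C] by simp
    also have "\<dots> \<le> (\<Sum>i\<in>{..<k}. p)" using cC by (intro sum_mono) auto
    also have "\<dots> = k * p" by simp
    finally have "(p - 1) * p * p \<le> k * p" using card_SL2_ge[OF assms] by linarith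
    hence "(p - 1) * p \<le> k" using p0 by simp
    thus ?thesis unfolding k_def by (simp add: mult.commute)
  qed
  have cl: "clique_number (SL2 p) (cayley_adj p) \<le> p^2 - 1"
  proof -
    have bnd: "\<And>K. is_clique (SL2 p) (cayley_adj p) K \<Longrightarrow> card K \<le> p^2 - 1"
    proof -
      fix K assume K: "is_clique (SL2 p) (cayley_adj p) K"
      have KS: "K \<subseteq> SL2 p" using K unfolding is_clique_def by simp
      have "inj_on rw K"
      proof (rule inj_onI)
        fix u v assume uK: "u \<in> K" and vK: "v \<in> K" and e: "rw u = rw v"
        show "u = v"
        proof (rule ccontr)
          assume "u \<noteq> v"
          hence "cayley_adj p u v" using K uK vK unfolding is_clique_def by blast
          moreover have "u \<in> SL2 p" "v \<in> SL2 p" using KS uK vK by auto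
          ultimately have "rw u \<noteq> rw v" using proper unfolding proper_coloring_def by blast
          thus False using e by simp
        qed
      qed
      hence "card K = card (rw ` K)" by (simp add: card_image)
      also have "\<dots> \<le> card (rw ` SL2 p)"
        using KS finite_SL2 by (intro card_mono) auto
      finally show "card K \<le> p^2 - 1" using cardim by simp
    qed
    have "{card K | K. is_clique (SL2 p) (cayley_adj p) K} \<subseteq> {..p^2 - 1}" using bnd by auto
    hence fin: "finite {card K | K. is_clique (SL2 p) (cayley_adj p) K}" using finite_subset by blast
    have "is_clique (SL2 p) (cayley_adj p) {}" by (simp add: is_clique_def)
    hence ne: "{card K | K. is_clique (SL2 p) (cayley_adj p) K} \<noteq> {}" by blast
    show ?thesis unfolding clique_number_def using fin ne bnd by (subst Max_le_iff) auto
  qed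
  show ?thesis using proper cardim lb ub cl unfolding rw_def by blast
qed

end
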